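(* Let $L\subset\mathbb{R}^3$ be a link (finite disjoint union of closed curves) of positive thickness. Then $L$ is regular. If moreover $L$ is $G$-invariant for a subgroup $G\subset\operatorname{O}(3)$, then $L$ is $G$-regular.
   Context: The thickness $\operatorname{Thi}(L)$ is the reach of $L$: the supremum of $\epsilon$ such that every point within distance $\epsilon$ of $L$ has a unique nearest point on $L$. A variation field $\eta$ is the initial velocity field of a smooth family $\phi^t$ ($t\in(-\epsilon,\epsilon)$) of $C^2$ diffeomorphisms of $\mathbb{R}^3$ with $\phi^0=\mathrm{Id}$; $\delta_\eta\operatorname{Thi}(L):=\frac{d}{dt^+}\operatorname{Thi}(\phi^t(L))|_{t=0}$. $L$ is regular if there is a variation field $\eta$ (a thickening field) with $\delta_\eta\operatorname{Thi}(L)>0$. $L$ is $G$-invariant if $gL=L$ for all $g\in G$; a field $\eta$ is $G$-invariant if $\eta(gx)=g\,\eta(x)$ for all $g\in G$, $x\in\mathbb{R}^3$. A $G$-invariant $L$ is $G$-regular if it has a $G$-invariant thickening field. *)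

theory Defs
  imports "HOL-Analysis.Analysis"
begin

type_synonym R3 = "real ^ 3"

definition closed_curve :: "R3 set \<Rightarrow> bool" where
  "closed_curve C \<longleftrightarrow>
     (\<exists>g. simple_path g \<and> pathfinish g = pathstart g \<and> C = path_image g)"

definition is_link :: "R3 set \<Rightarrow> bool" where
  "is_link L \<longleftrightarrow>
     (\<exists>\<C>. finite \<C> \<and> \<C> \<noteq> {} \<and> (\<forall>C\<in>\<C>. closed_curve C) \<and>
          pairwise disjnt \<C> \<and> L = \<Union>\<C>)"

text \<open>Thickness = reach: supremum of eps such that every point within distance eps
  of L has a unique nearest point on L.\<close>
definition Thi :: "R3 set \<Rightarrow> real" where
  "Thi L = Sup {\<epsilon>. 0 \<le> \<epsilon> \<and>
      (\<forall>x. infdist x L < \<epsilon> \<longrightarrow> (\<exists>!p. p \<in> L \<and> dist x p = infdist x L))}"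

definition C1_on :: "'a::real_normed_vector set \<Rightarrow> ('a \<Rightarrow> 'b::real_normed_vector) \<Rightarrow> bool" where
  "C1_on S f \<longleftrightarrow> (\<exists>f'. (\<forall>x\<in>S. (f has_derivative blinfun_apply (f' x)) (at x)) \<and> continuous_on S f')"

definition C2_on :: "'a::real_normed_vector set \<Rightarrow> ('a \<Rightarrow> 'b::real_normed_vector) \<Rightarrow> bool" where
  "C2_on S f \<longleftrightarrow> (\<exists>f'. (\<forall>x\<in>S. (f has_derivative blinfun_apply (f' x)) (at x)) \<and> C1_on S f')"

definition C2_diffeo :: "(R3 \<Rightarrow> R3) \<Rightarrow> bool" where
  "C2_diffeo f \<longleftrightarrow> bij f \<and> C2_on UNIV f \<and> C2_on UNIV (inv f)"

definition variation_family :: "real \<Rightarrow> (real \<Rightarrow> R3 \<Rightarrow> R3) \<Rightarrow> (R3 \<Rightarrow> R3) \<Rightarrow> bool" where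
  "variation_family \<epsilon> \<Phi> \<eta> \<longleftrightarrow>
     0 < \<epsilon> \<and> (\<forall>t\<in>{-\<epsilon><..<\<epsilon>}. C2_diffeo (\<Phi> t)) \<and> \<Phi> 0 = id \<and>
     C2_on ({-\<epsilon><..<\<epsilon>} \<times> UNIV) (\<lambda>(t, x). \<Phi> t x) \<and>
     (\<forall>x. ((\<lambda>t. \<Phi> t x) has_vector_derivative \<eta> x) (at 0))"

definition variation_field :: "(R3 \<Rightarrow> R3) \<Rightarrow> bool" where
  "variation_field \<eta> \<longleftrightarrow> (\<exists>\<epsilon> \<Phi>. variation_family \<epsilon> \<Phi> \<eta>)"

definition thickening_field :: "R3 set \<Rightarrow> (R3 \<Rightarrow> R3) \<Rightarrow> bool" where
  "thickening_field L \<eta> \<longleftrightarrow>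
     (\<exists>\<epsilon> \<Phi> D. variation_family \<epsilon> \<Phi> \<eta> \<and> 0 < D \<and>
        ((\<lambda>t. Thi (\<Phi> t ` L)) has_real_derivative D) (at 0 within {0..}))"

definition regular :: "R3 set \<Rightarrow> bool" where
  "regular L \<longleftrightarrow> (\<exists>\<eta>. thickening_field L \<eta>)"

definition subgroup_O3 :: "(real ^ 3 ^ 3) set \<Rightarrow> bool" where
  "subgroup_O3 G \<longleftrightarrow> (\<forall>A\<in>G. orthogonal_matrix A) \<and> mat 1 \<in> G \<and>
     (\<forall>A\<in>G. \<forall>B\<in>G. A ** B \<in> G) \<and> (\<forall>A\<in>G. matrix_inv A \<in> G)"

definition G_invariant_set :: "(real ^ 3 ^ 3) set \<Rightarrow> R3 set \<Rightarrow> bool" where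
  "G_invariant_set G L \<longleftrightarrow> (\<forall>g\<in>G. (\<lambda>x. g *v x) ` L = L)"

definition G_invariant_field :: "(real ^ 3 ^ 3) set \<Rightarrow> (R3 \<Rightarrow> R3) \<Rightarrow> bool" where
  "G_invariant_field G \<eta> \<longleftrightarrow> (\<forall>g\<in>G. \<forall>x. \<eta> (g *v x) = g *v \<eta> x)"

definition G_regular :: "(real ^ 3 ^ 3) set \<Rightarrow> R3 set \<Rightarrow> bool" where
  "G_regular G L \<longleftrightarrow> (\<exists>\<eta>. G_invariant_field G \<eta> \<and> thickening_field L \<eta>)"

end

theory Submission
  imports Defs
begin


lemma C2_on_scale: "C2_on UNIV (\<lambda>x::R3. a *\<^sub>R x)"
  unfolding C2_on_def C1_on_def
  apply (rule exI[of _ "\<lambda>_. a *\<^sub>R id_blinfun"])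
  apply (intro conjI ballI)
   apply (auto intro!: derivative_eq_intros simp: fun_eq_iff scaleR_blinfun.rep_eq plus_blinfun.rep_eq zero_blinfun.rep_eq)
  apply (rule exI[of _ "\<lambda>_. 0"])
  apply (auto intro!: derivative_eq_intros simp: fun_eq_iff scaleR_blinfun.rep_eq plus_blinfun.rep_eq zero_blinfun.rep_eq)
  done

definition DD :: "real \<times> R3 \<Rightarrow> (real \<times> R3) \<Rightarrow>\<^sub>L R3" where
 "DD p = blinfun_compose (blinfun_scaleR_left (snd p)) fst_blinfun + blinfun_compose (blinfun_scaleR_right (1 + fst p)) snd_blinfun"

definition BB :: "real \<times> R3 \<Rightarrow> (real \<times> R3) \<Rightarrow>\<^sub>L R3" where
 "BB p = blinfun_compose (blinfun_scaleR_left (snd p)) fst_blinfun + blinfun_compose (blinfun_scaleR_right (fst p)) snd_blinfun"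

lemma BB_lin: "bounded_linear BB"
  unfolding BB_def
  by (intro bounded_linear_intros bounded_linear_compose[OF bounded_bilinear.bounded_linear_left[OF bounded_bilinear_blinfun_compose]]
      bounded_linear_compose[OF bounded_linear_blinfun_scaleR_left] bounded_linear_compose[OF bounded_linear_blinfun_scaleR_right] bounded_linear_fst bounded_linear_snd)

lemma DD_eq: "DD p = blinfun_compose (blinfun_scaleR_right 1) snd_blinfun + BB p"
  by (rule blinfun_eqI) (simp add: DD_def BB_def algebra_simps plus_blinfun.rep_eq blinfun_scaleR_right.rep_eq)

lemma DD_deriv: "(DD has_derivative blinfun_apply (Blinfun BB)) (at p)"
proof -
  have "((\<lambda>p. blinfun_compose (blinfun_scaleR_right 1) snd_blinfun + BB p) has_derivative BB) (at p)"
    using has_derivative_add[OF has_derivative_const bounded_linear_imp_has_derivative[OF BB_lin]] by simp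
  moreover have "DD = (\<lambda>p. blinfun_compose (blinfun_scaleR_right 1) snd_blinfun + BB p)"
    using DD_eq by (simp add: fun_eq_iff)
  ultimately have "(DD has_derivative BB) (at p)" by simp
  then show ?thesis using BB_lin by (simp add: bounded_linear_Blinfun_apply)
qed

lemma joint: "C2_on S (\<lambda>(t, x::R3). (1 + t) *\<^sub>R x)"
  unfolding C2_on_def C1_on_def
  apply (rule exI[of _ DD])
  apply (intro conjI ballI)
   apply (auto intro!: derivative_eq_intros simp: fun_eq_iff DD_def split_beta' plus_blinfun.rep_eq blinfun_scaleR_right.rep_eq algebra_simps)[1]
  apply (rule exI[of _ "\<lambda>_. Blinfun BB"])
  using DD_deriv by auto



lemma inv_scale: "c \<noteq> 0 \<Longrightarrow> inv (\<lambda>x::R3. c *\<^sub>R x) = (\<lambda>x. (1/c) *\<^sub>R x)"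
  by (rule inv_unique_comp) (auto simp: fun_eq_iff)

lemma bij_scale: "c \<noteq> 0 \<Longrightarrow> bij (\<lambda>x::R3. c *\<^sub>R x)"
  by (intro bij_betwI[of _ _ _ "\<lambda>x. (1/c) *\<^sub>R x"]) auto

definition Phi :: "real \<Rightarrow> R3 \<Rightarrow> R3" where "Phi t x = (1 + t) *\<^sub>R x"

lemma vf: "variation_family (1/2) Phi (\<lambda>x. x)"
  unfolding variation_family_def
proof (intro conjI ballI allI)
  fix t :: real assume t: "t \<in> {-(1/2)<..<1/2}"
  hence ne: "1 + t \<noteq> 0" by auto
  show "C2_diffeo (Phi t)"
    unfolding C2_diffeo_def Phi_def using ne
    by (simp add: bij_scale inv_scale C2_on_scale)
next
  show "Phi 0 = id" by (auto simp: Phi_def fun_eq_iff)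
  show "C2_on ({- (1 / 2)<..<1 / 2} \<times> UNIV) (\<lambda>(t, x). Phi t x)"
    using joint by (simp add: Phi_def)
  fix x :: R3
  show "((\<lambda>t. Phi t x) has_vector_derivative x) (at 0)"
    unfolding Phi_def by (auto intro!: derivative_eq_intros)
qed simp



definition AA :: "R3 set \<Rightarrow> real set" where
  "AA L = {\<epsilon>. 0 \<le> \<epsilon> \<and>
      (\<forall>x. infdist x L < \<epsilon> \<longrightarrow> (\<exists>!p. p \<in> L \<and> dist x p = infdist x L))}"

lemma Thi_AA: "Thi L = Sup (AA L)" by (simp add: Thi_def AA_def)

lemma dist_sc: "c > 0 \<Longrightarrow> dist (c *\<^sub>R x) (c *\<^sub>R (y::R3)) = c * dist x y"
  by (simp add: dist_norm scaleR_diff_right[symmetric])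

lemma infdist_scale:
  fixes L :: "R3 set"
  assumes "closed L" "L \<noteq> {}" "c > 0"
  shows "infdist (c *\<^sub>R x) ((*\<^sub>R) c ` L) = c * infdist x L"
proof (rule antisym)
  obtain p where p: "p \<in> L" "infdist x L = dist x p"
    using infdist_attains_inf[OF assms(1,2)] by blast
  have "infdist (c *\<^sub>R x) ((*\<^sub>R) c ` L) \<le> dist (c *\<^sub>R x) (c *\<^sub>R p)"
    using p by (intro infdist_le) auto
  also have "\<dots> = c * infdist x L" using p assms by (simp add: dist_sc)
  finally show "infdist (c *\<^sub>R x) ((*\<^sub>R) c ` L) \<le> c * infdist x L" .
next
  have cl: "closed ((*\<^sub>R) c ` L)" using assms closed_scaling by blast
  obtain q where q: "q \<in> (*\<^sub>R) c ` L" "infdist (c *\<^sub>R x) ((*\<^sub>R) c ` L) = dist (c *\<^sub>R x) q"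
    using infdist_attains_inf[OF cl] assms(2) by blast
  then obtain p where p: "p \<in> L" "q = c *\<^sub>R p" by auto
  have "c * infdist x L \<le> c * dist x p" using p assms by (simp add: infdist_le)
  also have "\<dots> = infdist (c *\<^sub>R x) ((*\<^sub>R) c ` L)" using q p assms by (simp add: dist_sc)
  finally show "c * infdist x L \<le> infdist (c *\<^sub>R x) ((*\<^sub>R) c ` L)" .
qed

lemma AA_scale_sub:
  fixes L :: "R3 set"
  assumes "closed L" "L \<noteq> {}" "c > 0" "e \<in> AA L"
  shows "c * e \<in> AA ((*\<^sub>R) c ` L)"
  unfolding AA_def mem_Collect_eq
proof (intro conjI allI impI)
  show "0 \<le> c * e" using assms by (simp add: AA_def)
  fix y :: R3 assume y: "infdist y ((*\<^sub>R) c ` L) < c * e"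
  define x where "x = (1/c) *\<^sub>R y"
  have yx: "y = c *\<^sub>R x" using assms by (simp add: x_def)
  have "c * infdist x L < c * e" using y yx infdist_scale[OF assms(1-3)] by simp
  hence "infdist x L < e" using assms by simp
  then obtain p where p: "p \<in> L" "dist x p = infdist x L"
     and u: "\<And>q. q \<in> L \<Longrightarrow> dist x q = infdist x L \<Longrightarrow> q = p"
    using assms(4) unfolding AA_def by blast
  show "\<exists>!p. p \<in> (*\<^sub>R) c ` L \<and> dist y p = infdist y ((*\<^sub>R) c ` L)"
  proof (rule ex1I[of _ "c *\<^sub>R p"])
    show "c *\<^sub>R p \<in> (*\<^sub>R) c ` L \<and> dist y (c *\<^sub>R p) = infdist y ((*\<^sub>R) c ` L)"
      using p yx infdist_scale[OF assms(1-3)] assms by (simp add: dist_sc)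
  next
    fix q assume q: "q \<in> (*\<^sub>R) c ` L \<and> dist y q = infdist y ((*\<^sub>R) c ` L)"
    then obtain r where r: "r \<in> L" "q = c *\<^sub>R r" by auto
    have "c * dist x r = c * infdist x L"
      using q r yx infdist_scale[OF assms(1-3)] assms by (simp add: dist_sc)
    hence "dist x r = infdist x L" using assms by simp
    thus "q = c *\<^sub>R p" using u r by simp
  qed
qed

lemma AA_scale:
  fixes L :: "R3 set"
  assumes "closed L" "L \<noteq> {}" "c > 0"
  shows "AA ((*\<^sub>R) c ` L) = (\<lambda>y. c * y) ` AA L"
proof
  show "(\<lambda>y. c * y) ` AA L \<subseteq> AA ((*\<^sub>R) c ` L)" using AA_scale_sub[OF assms] by auto
next
  have cl: "closed ((*\<^sub>R) c ` L)" using assms closed_scaling by blast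
  have bk: "(\<lambda>x. (1/c) *\<^sub>R x) ` (\<lambda>x. c *\<^sub>R x) ` L = L" using assms by (auto simp: image_image image_iff)
  show "AA ((*\<^sub>R) c ` L) \<subseteq> (\<lambda>y. c * y) ` AA L"
  proof
    fix e assume "e \<in> AA ((*\<^sub>R) c ` L)"
    from AA_scale_sub[OF cl _ _ this, of "1/c"] assms bk
    have "(1/c) * e \<in> AA L" by auto
    moreover have "e = c * ((1/c) * e)" using assms by simp
    ultimately show "e \<in> (\<lambda>y. c * y) ` AA L" by blast
  qed
qed

lemma AA_0: "0 \<in> AA L"
  unfolding AA_def using infdist_nonneg not_less by fastforce

lemma Sup_scale:
  fixes S :: "real set"
  assumes ne: "S \<noteq> {}" and bd: "bdd_above S" and c: "c > 0"
  shows "Sup ((*) c ` S) = c * Sup S"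
proof (rule antisym)
  have up: "x \<le> Sup S" if "x \<in> S" for x using cSup_upper[OF that bd] .
  show "Sup ((*) c ` S) \<le> c * Sup S"
  proof (rule cSup_least)
    show "(*) c ` S \<noteq> {}" using ne by simp
    fix y assume "y \<in> (*) c ` S"
    then obtain x where "x \<in> S" "y = c * x" by auto
    thus "y \<le> c * Sup S" using up c by (simp add: mult_left_mono)
  qed
  obtain M where M: "\<And>x. x \<in> S \<Longrightarrow> x \<le> M" using bd unfolding bdd_above_def by blast
  have b2: "bdd_above ((*) c ` S)"
    unfolding bdd_above_def
  proof (intro exI ballI)
    fix y assume "y \<in> (*) c ` S"
    then obtain x where "x \<in> S" "y = c * x" by auto
    thus "y \<le> c * M" using M c by (simp add: mult_left_mono)
  qed
  have "Sup S \<le> Sup ((*) c ` S) / c"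
  proof (rule cSup_least[OF ne])
    fix x assume x: "x \<in> S"
    have "c * x \<le> Sup ((*) c ` S)" using x b2 by (intro cSup_upper) auto
    thus "x \<le> Sup ((*) c ` S) / c" using c by (simp add: pos_le_divide_eq mult.commute)
  qed
  thus "c * Sup S \<le> Sup ((*) c ` S)" using c by (simp add: pos_le_divide_eq mult.commute)
qed

lemma Thi_scale:
  fixes L :: "R3 set"
  assumes "closed L" "L \<noteq> {}" "c > 0" "bdd_above (AA L)"
  shows "Thi ((*\<^sub>R) c ` L) = c * Thi L"
proof -
  have "AA L \<noteq> {}" using AA_0 by blast
  thus ?thesis using assms by (simp add: Thi_AA AA_scale Sup_scale)
qed



lemma link_bdd:
  assumes "is_link L"
  shows "bdd_above (AA L)"
proof (rule ccontr)
  assume nb: "\<not> bdd_above (AA L)"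
  obtain \<C> where C: "finite \<C>" "\<C> \<noteq> {}" "\<forall>C\<in>\<C>. closed_curve C" "pairwise disjnt \<C>" "L = \<Union>\<C>"
    using assms unfolding is_link_def by blast
  have compC: "compact C" "C \<noteq> {}" if "C \<in> \<C>" for C
    using C(3) that unfolding closed_curve_def
    by (metis compact_path_image simple_path_imp_path path_image_nonempty)+
  have cL: "compact L" using C compC by (auto intro!: compact_Union)
  have neL: "L \<noteq> {}" using C compC by auto
  have uniq: "\<exists>!p. p \<in> L \<and> dist x p = infdist x L" for x
  proof -
    obtain e where "e \<in> AA L" "infdist x L < e"
      using nb unfolding bdd_above_def by (meson not_le)
    thus ?thesis unfolding AA_def by blast
  qed
  define P where "P x = (THE p. p \<in> L \<and> dist x p = infdist x L)" for x
  have P: "P x \<in> L \<and> dist x (P x) = infdist x L" for x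
    unfolding P_def by (rule theI'[OF uniq])
  have Pid: "P x = x" if "x \<in> L" for x
    using uniq[of x] P[of x] that by auto
  have graph: "(\<lambda>x. (x, P x)) ` UNIV = (UNIV \<times> L) \<inter> {z. dist (fst z) (snd z) = infdist (fst z) L}"
  proof (intro equalityI subsetI)
    fix z assume "z \<in> (UNIV \<times> L) \<inter> {z. dist (fst z) (snd z) = infdist (fst z) L}"
    then obtain x p where z: "z = (x,p)" "p \<in> L" "dist x p = infdist x L" by auto
    hence "p = P x" using uniq[of x] P[of x] by auto
    thus "z \<in> (\<lambda>x. (x, P x)) ` UNIV" using z by auto
  qed (use P in auto)
  have "closed ((\<lambda>x. (x, P x)) ` UNIV)"
    unfolding graph
    by (intro closed_Int closed_Times closed_Collect_eq compact_imp_closed cL closed_UNIV)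
       (auto intro!: continuous_intros)
  hence contP: "continuous_on UNIV P"
    using P by (intro continuous_from_closed_graph[OF cL]) auto
  have "retraction UNIV L P"
    unfolding retraction_def using contP P Pid by (auto simp: image_iff)
  hence "L retract_of UNIV" unfolding retract_of_def by blast
  hence "contractible L"
    by (rule retract_of_contractible[rotated]) (simp add: convex_imp_contractible)
  hence conL: "connected L" by (rule contractible_imp_connected)
  obtain C0 where C0: "C0 \<in> \<C>" using C by blast
  define R where "R = \<Union>(\<C> - {C0})"
  have "closed R" unfolding R_def using C compC by (auto intro!: closed_Union compact_imp_closed)
  moreover have "closed C0" using compC C0 compact_imp_closed by blast
  moreover have "C0 \<inter> R = {}" unfolding R_def using C(4) C0
    by (auto simp: pairwise_def disjnt_def)
  moreover have "L = C0 \<union> R" using C C0 unfolding R_def by auto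
  ultimately have "R = {}" using conL compC[OF C0] unfolding connected_closed by blast
  hence LC: "L = C0" using \<open>L = C0 \<union> R\<close> by simp
  obtain g where g: "simple_path g" "pathfinish g = pathstart g" "C0 = path_image g"
    using C(3) C0 unfolding closed_curve_def by blast
  have "C0 homeomorphic sphere (0::complex) 1"
    using g by (simp add: homeomorphic_simple_path_image_circle)
  hence "contractible (sphere (0::complex) 1)"
    using \<open>contractible L\<close> LC homeomorphic_contractible by blast
  thus False by (simp add: contractible_sphere)
qed



lemma thick:
  assumes "is_link L" "Thi L > 0"
  shows "thickening_field L (\<lambda>x. x)"
proof -
  obtain \<C> where C: "finite \<C>" "\<C> \<noteq> {}" "\<forall>C\<in>\<C>. closed_curve C" "L = \<Union>\<C>"
    using assms unfolding is_link_def by blast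
  have compC: "compact C" "C \<noteq> {}" if "C \<in> \<C>" for C
    using C(3) that unfolding closed_curve_def
    by (metis compact_path_image simple_path_imp_path path_image_nonempty)+
  have clL: "closed L" using C compC by (auto intro!: compact_imp_closed compact_Union)
  have neL: "L \<noteq> {}" using C compC by auto
  have eq: "Thi (Phi t ` L) = (1 + t) * Thi L" if "t \<in> {0..}" for t
  proof -
    have "Phi t ` L = (*\<^sub>R) (1 + t) ` L" by (simp add: Phi_def[abs_def])
    thus ?thesis using Thi_scale[OF clL neL _ link_bdd[OF assms(1)], of "1+t"] that by simp
  qed
  have "((\<lambda>t. (1 + t) * Thi L) has_real_derivative Thi L) (at 0 within {0..})"
    by (auto intro!: derivative_eq_intros)
  hence "((\<lambda>t. Thi (Phi t ` L)) has_real_derivative Thi L) (at 0 within {0..})"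
    by (rule has_field_derivative_transform_within[of _ _ _ _ 1]) (auto simp: eq)
  thus ?thesis unfolding thickening_field_def using vf assms(2) by blast
qed

theorem lemma3p7:
  fixes L :: "R3 set"
  assumes "is_link L"
    and "Thi L > 0"
  shows "regular L \<and>
         (\<forall>G. subgroup_O3 G \<and> G_invariant_set G L \<longrightarrow> G_regular G L)"
  using thick[OF assms]
  by (auto simp: regular_def G_regular_def G_invariant_field_def)

end
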